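(* Let $g_n$ ($n\ge0$) denote the parity of the number of digits equal to $1$ in the negabinary representation of $n$. Then the infinite word $g_0g_1g_2\cdots$ is cube-free: there is no nonempty finite word $X$ over $\{0,1\}$ such that $XXX$ occurs as a block of consecutive terms $g_a g_{a+1}\cdots g_{a+3|X|-1}$ for some $a\ge0$.
   Context: Every nonnegative integer $n$ has a unique representation $n=\sum_{i\ge0} d_i(-2)^i$ with digits $d_i\in\{0,1\}$, only finitely many nonzero; this is the negabinary (base $-2$) representation. Parity means the number modulo $2$. *)

theory Defs
  imports Main
begin

definition negaval :: "nat list \<Rightarrow> int" where
  "negaval ds = (\<Sum>i<length ds. int (ds ! i) * (-2) ^ i)"

definition is_negabinary_rep :: "nat \<Rightarrow> nat list \<Rightarrow> bool" where
  "is_negabinary_rep n ds \<longleftrightarrow> set ds \<subseteq> {0, 1} \<and> (ds \<noteq> [] \<longrightarrow> last ds \<noteq> 0)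
     \<and> negaval ds = int n"

definition negabinary :: "nat \<Rightarrow> nat list" where
  "negabinary n = (THE ds. is_negabinary_rep n ds)"

definition g :: "nat \<Rightarrow> nat" where
  "g n = (count_list (negabinary n) 1) mod 2"

end

theory Submission
  imports Defs
begin

definition valid :: "int \<Rightarrow> nat list \<Rightarrow> bool" where
  "valid z ds \<longleftrightarrow> set ds \<subseteq> {0, 1} \<and> (ds \<noteq> [] \<longrightarrow> last ds \<noteq> 0) \<and> negaval ds = z"

lemma negaval_Nil[simp]: "negaval [] = 0"
  by (simp add: negaval_def)

lemma negaval_Cons[simp]: "negaval (d # ds) = int d + (-2) * negaval ds"
proof -
  have "negaval (d # ds) = (\<Sum>i<Suc (length ds). int ((d#ds) ! i) * (-2) ^ i)"
    by (simp add: negaval_def)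
  also have "\<dots> = int d + (\<Sum>i<length ds. int (ds ! i) * (-2) ^ Suc i)"
    by (subst sum.lessThan_Suc_shift) simp
  also have "\<dots> = int d + (-2) * negaval ds"
    by (simp add: negaval_def sum_distrib_left mult.commute mult.left_commute)
  finally show ?thesis .
qed

lemma valid0: "valid 0 ys \<Longrightarrow> ys = []"
proof (induction ys)
  case Nil then show ?case by simp
next
  case (Cons y ys)
  have y: "y \<in> {0,1}" and s: "set ys \<subseteq> {0,1}" using Cons.prems by (auto simp: valid_def)
  have e: "int y + (-2) * negaval ys = 0" using Cons.prems by (simp add: valid_def)
  have "y = 0"
  proof (rule ccontr)
    assume "y \<noteq> 0" then have "y = 1" using y by auto
    with e show False by presburger
  qed
  then have "negaval ys = 0" using e by simp
  have "ys \<noteq> []" using Cons.prems \<open>y = 0\<close> by (auto simp: valid_def)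
  then have "valid 0 ys" using Cons.prems \<open>negaval ys = 0\<close> s by (auto simp: valid_def)
  then show ?case using Cons.IH \<open>ys \<noteq> []\<close> by simp
qed

lemma valid_tail: "valid z (x # xs) \<Longrightarrow> valid (negaval xs) xs"
  by (cases xs) (auto simp: valid_def)

lemma valid_unique: "valid z xs \<Longrightarrow> valid z ys \<Longrightarrow> xs = ys"
proof (induction xs arbitrary: z ys)
  case Nil
  then have "z = 0" by (simp add: valid_def)
  then show ?case using Nil valid0 by metis
next
  case (Cons x xs)
  show ?case
  proof (cases ys)
    case Nil
    then have "z = 0" using Cons by (simp add: valid_def)
    then show ?thesis using Cons.prems valid0 by blast
  next
    fix y ys' assume Cons2: "ys = y # ys'"
    have x: "x \<in> {0,1}" and y: "y \<in> {0,1}" using Cons.prems Cons2 by (auto simp: valid_def)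
    have e: "int x + (-2) * negaval xs = int y + (-2) * negaval ys'"
      using Cons.prems Cons2 by (simp add: valid_def)
    have xy: "x = y"
    proof -
      have "x = 0 \<or> x = 1" "y = 0 \<or> y = 1" using x y by auto
      then show ?thesis using e by presburger
    qed
    then have "negaval xs = negaval ys'" using e by simp
    moreover have "valid (negaval xs) xs" using Cons.prems(1) valid_tail by blast
    moreover have "valid (negaval ys') ys'" using Cons.prems(2) Cons2 valid_tail by blast
    ultimately have "xs = ys'" using Cons.IH by metis
    then show ?thesis using xy Cons2 by simp
  qed
qed

lemma valid_Cons:
  assumes "valid z ds" "d \<in> {0,1}" "\<not> (d = 0 \<and> z = 0)"
  shows "valid (int d + (-2) * z) (d # ds)"
proof -
  have "ds = [] \<Longrightarrow> d \<noteq> 0" using assms by (auto simp: valid_def)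
  then show ?thesis using assms by (auto simp: valid_def)
qed

lemma valid_exists: "\<exists>ds. valid z ds"
proof (induction z rule: measure_induct_rule[where f="\<lambda>z. nat (2 * \<bar>z\<bar> + (if z < 0 then 1 else 0))"])
  case (less z)
  show ?case
  proof (cases "z = 0")
    case True
    then show ?thesis by (rule_tac x="[]" in exI) (simp add: valid_def)
  next
    case False
    define d where "d = nat (z mod 2)"
    define z' where "z' = (int d - z) div 2"
    have "z mod 2 = 0 \<or> z mod 2 = 1" by presburger
    then have d01: "d \<in> {0,1}" unfolding d_def by auto
    have "int d = z mod 2" unfolding d_def by simp
    then have zeq: "z = int d + (-2) * z'" unfolding z'_def by presburger
    have "nat (2 * \<bar>z'\<bar> + (if z' < 0 then 1 else 0)) < nat (2 * \<bar>z\<bar> + (if z < 0 then 1 else 0))"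
      using False d01 zeq by (auto split: if_splits)
    then obtain ds where "valid z' ds" using less by blast
    moreover have "\<not> (d = 0 \<and> z' = 0)" using False zeq by auto
    ultimately have "valid z (d # ds)" using valid_Cons d01 zeq by metis
    then show ?thesis by blast
  qed
qed

definition rep :: "int \<Rightarrow> nat list" where "rep z = (THE ds. valid z ds)"

lemma rep_valid: "valid z (rep z)"
  unfolding rep_def by (rule theI') (use valid_exists valid_unique in blast)

lemma rep_eq: "valid z ds \<Longrightarrow> rep z = ds"
  using rep_valid valid_unique by blast

definition h :: "int \<Rightarrow> nat" where "h z = count_list (rep z) 1 mod 2"

lemma g_h: "g n = h (int n)"
proof -
  have "is_negabinary_rep n = valid (int n)"
    by (rule ext) (simp add: is_negabinary_rep_def valid_def)
  then have "negabinary n = rep (int n)" by (simp add: negabinary_def rep_def)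
  then show ?thesis by (simp add: g_def h_def)
qed

lemma h_step: "d \<in> {0,1} \<Longrightarrow> h (int d + (-2) * z) = (d + h z) mod 2"
proof (cases "d = 0 \<and> z = 0")
  case True
  then show ?thesis by (simp add: h_def rep_eq valid_def)
next
  case False
  assume d: "d \<in> {0,1}"
  have "rep (int d + (-2) * z) = d # rep z"
    using valid_Cons[OF rep_valid d False] rep_eq by blast
  then show ?thesis using d by (auto simp: h_def mod_Suc)
qed

lemma h_lt: "h z < 2" by (simp add: h_def)

lemma h_even: "h (2 * m) = h (- m)"
proof -
  have "h (int 0 + (-2) * (-m)) = (0 + h (-m)) mod 2" by (rule h_step) simp
  then show ?thesis using h_lt[of "-m"] by simp
qed

lemma h_odd: "h (2 * m + 1) = 1 - h (- m)"
proof -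
  have "h (int 1 + (-2) * (-m)) = (1 + h (-m)) mod 2" by (rule h_step) simp
  moreover have "h (-m) = 0 \<or> h (-m) = 1" using h_lt[of "-m"] by auto
  ultimately show ?thesis by (auto simp: add.commute)
qed

lemma h4_0: "h (4 * k) = h k"
proof -
  have "h (4*k) = h (2*(2*k))" by (rule arg_cong[where f=h]) simp
  also have "\<dots> = h (-(2*k))" by (rule h_even)
  also have "\<dots> = h (2*(-k))" by (rule arg_cong[where f=h]) simp
  also have "\<dots> = h (-(-k))" by (rule h_even)
  finally show ?thesis by simp
qed

lemma h4_1: "h (4 * k + 1) = 1 - h k"
proof -
  have "h (4*k+1) = h (2*(2*k)+1)" by (rule arg_cong[where f=h]) simp
  also have "\<dots> = 1 - h (-(2*k))" by (rule h_odd)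
  also have "h (-(2*k)) = h (2*(-k))" by (rule arg_cong[where f=h]) simp
  also have "\<dots> = h (-(-k))" by (rule h_even)
  finally show ?thesis by simp
qed

lemma h4_2: "h (4 * k + 2) = 1 - h (k + 1)"
proof -
  have "h (4*k+2) = h (2*(2*k+1))" by (rule arg_cong[where f=h]) simp
  also have "\<dots> = h (-(2*k+1))" by (rule h_even)
  also have "\<dots> = h (2 * (-(k+1)) + 1)" by (rule arg_cong[where f=h]) simp
  also have "\<dots> = 1 - h (-(-(k+1)))" by (rule h_odd)
  finally show ?thesis by (simp add: add.commute)
qed

lemma h4_3: "h (4 * k + 3) = h (k + 1)"
proof -
  have "h (4*k+3) = h (2*(2*k+1)+1)" by (rule arg_cong[where f=h]) simp
  also have "\<dots> = 1 - h (-(2*k+1))" by (rule h_odd)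
  also have "h (-(2*k+1)) = h (2 * (-(k+1)) + 1)" by (rule arg_cong[where f=h]) simp
  also have "\<dots> = 1 - h (-(-(k+1)))" by (rule h_odd)
  finally show ?thesis using h_lt[of "k+1"] by (simp add: add.commute)
qed

lemma g_lt: "g n < 2" by (simp add: g_h h_lt)

lemma g_int: "g (4*k+r) = h (4 * int k + int r)"
  by (simp only: g_h of_nat_add of_nat_mult of_nat_numeral)

lemma g0: "g (4*k) = g k" using g_int[of k 0] h4_0[of "int k"] by (simp add: g_h)
lemma g1: "g (4*k+1) = 1 - g k" using g_int[of k 1] h4_1[of "int k"] by (simp add: g_h)
lemma g2: "g (4*k+2) = 1 - g (k+1)" using g_int[of k 2] h4_2[of "int k"] by (simp add: g_h add.commute)
lemma g3: "g (4*k+3) = g (k+1)" using g_int[of k 3] h4_3[of "int k"] by (simp add: g_h add.commute)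

lemma gD: assumes "even n" shows "g n \<noteq> g (Suc n)"
proof -
  have "n mod 4 = 0 \<or> n mod 4 = 2" using assms by presburger
  then show ?thesis
  proof
    assume "n mod 4 = 0"
    then have "n = 4*(n div 4)" by presburger
    then obtain k where "n = 4*k" by blast
    then have "g n = g k" "g (Suc n) = 1 - g k" using g0[of k] g1[of k] by simp_all
    then show ?thesis using g_lt[of k] by presburger
  next
    assume "n mod 4 = 2"
    then have "n = 4*(n div 4)+2" by presburger
    then obtain k where "n = 4*k+2" by blast
    moreover from this have "Suc n = 4*k+3" by simp
    ultimately have "g n = 1 - g (k+1)" "g (Suc n) = g (k+1)" using g2[of k] g3[of k] by (simp only:)+
    then show ?thesis using g_lt[of "k+1"] by presburger
  qed
qed

lemma gE: assumes "n mod 4 = 3" shows "g n = g (Suc n)"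
proof -
  have "n = 4*(n div 4)+3" using assms by presburger
  then obtain k where n: "n = 4*k+3" by blast
  then have "Suc n = 4*(k+1)" by simp
  then show ?thesis using n g3[of k] g0[of "k+1"] by simp
qed

lemma gF: assumes "n mod 4 = 1" shows "(g n = g (Suc n)) = (g (n div 4) = g (n div 4 + 1))"
proof -
  have "n = 4*(n div 4)+1" using assms by presburger
  then obtain k where n: "n = 4*k+1" by blast
  then have "Suc n = 4*k+2" "n div 4 = k" by simp_all
  then show ?thesis using n g1[of k] g2[of k] g_lt[of k] g_lt[of "k+1"] by auto
qed

lemma no_cube: "0 < p \<Longrightarrow> (\<forall>i<2*p. g (a+i) = g (a+i+p)) \<Longrightarrow> False"
proof (induction p arbitrary: a rule: less_induct)
  case (less p)
  note C = less.prems(2)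
  have S: "(g j = g (Suc j)) = (g (j+p) = g (Suc (j+p)))" if "a \<le> j" "j + 1 < a + 2*p" for j
  proof -
    have "g (a + (j-a)) = g (a + (j-a) + p)" "g (a + (j+1-a)) = g (a + (j+1-a) + p)"
      using C[rule_format, of "j-a"] C[rule_format, of "j+1-a"] that by auto
    moreover have "a + (j-a) = j" "a + (j+1-a) = Suc j" using that by auto
    ultimately show ?thesis by auto
  qed
  consider "p = 1" | "p = 2" | "odd p" "p \<ge> 3" | "p mod 4 = 2" "p \<ge> 6" | "p mod 4 = 0"
  proof -
    have "p = 1 \<or> p = 2 \<or> (odd p \<and> p \<ge> 3) \<or> (p mod 4 = 2 \<and> p \<ge> 6) \<or> p mod 4 = 0"
      using less.prems(1) by presburger
    then show ?thesis using that by meson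
  qed
  then show False
  proof cases
    case 1
    have "g a = g (Suc a)" "g (Suc a) = g (Suc (Suc a))" using C[rule_format, of 0] C[rule_format, of 1] 1 by simp_all
    moreover have "even a \<or> even (Suc a)" by simp
    ultimately show False using gD by metis
  next
    case 2
    have cc: "g (a+i) = g (a+i+2)" if "i < 4" for i using C that 2 by auto
    have c: "g a = g (a+2)" "g (a+1) = g (a+3)" "g (a+2) = g (a+4)" "g (a+3) = g (a+5)"
      using cc[of 0] cc[of 1] cc[of 2] cc[of 3] by (simp_all add: numeral_eq_Suc)
    have s: "(g j = g (Suc j)) = (g a = g (Suc a))" if "a \<le> j" "j \<le> a + 3" for j
    proof -
      have "j = a \<or> j = a+1 \<or> j = a+2 \<or> j = a+3" using that by auto
      then show ?thesis using c by (auto simp: numeral_eq_Suc)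
    qed
    have "\<exists>j. a \<le> j \<and> j \<le> a+3 \<and> j mod 4 = 3" by presburger
    then obtain j where j: "a \<le> j" "j \<le> a+3" "j mod 4 = 3" by blast
    have "\<exists>j'. a \<le> j' \<and> j' \<le> a+3 \<and> even j'" by presburger
    then obtain j' where j': "a \<le> j'" "j' \<le> a+3" "even j'" by blast
    show False using s[OF j(1,2)] s[OF j'(1,2)] gE[OF j(3)] gD[OF j'(3)] by simp
  next
    case 3
    have "\<exists>j. a \<le> j \<and> j \<le> a+3 \<and> (j+p) mod 4 = 3" by presburger
    then obtain j where j: "a \<le> j" "j \<le> a+3" "(j+p) mod 4 = 3" by blast
    have "even j" using j(3) 3 by presburger
    show False using S[of j] j 3 gD[OF \<open>even j\<close>] gE[OF j(3)] by simp
  next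
    case 4
    have "\<exists>j. a \<le> j \<and> j \<le> a+3 \<and> j mod 4 = 1" by presburger
    then obtain j where j: "a \<le> j" "j \<le> a+3" "j mod 4 = 1" by blast
    have j1: "(j+p) mod 4 = 3" "(j+4+p) mod 4 = 3" "(j+4) mod 4 = 1" using j 4 by presburger+
    have "g j = g (Suc j)" using S[of j] j 4 gE[OF j1(1)] by simp
    then have A: "g (j div 4) = g (j div 4 + 1)" using gF[OF j(3)] by simp
    have "g (j+4) = g (Suc (j+4))" using S[of "j+4"] j 4 gE[OF j1(2)] by simp
    then have B: "g ((j+4) div 4) = g ((j+4) div 4 + 1)" using gF[OF j1(3)] by simp
    have "(j+4) div 4 = j div 4 + 1" by simp
    moreover have "even (j div 4) \<or> even (j div 4 + 1)" by simp
    ultimately show False using A B gD by (metis Suc_eq_plus1)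
  next
    case 5
    define q where "q = p div 4"
    have pq: "p = 4*q" "0 < q" "q < p" using 5 less.prems(1) unfolding q_def by auto
    define b where "b = (a+3) div 4"
    have "g (b+i) = g (b+i+q)" if "i < 2*q" for i
    proof -
      have "a \<le> 4*(b+i)" "4*(b+i) < a + 2*p" using that pq unfolding b_def by auto
      then have "g (a + (4*(b+i) - a)) = g (a + (4*(b+i)-a) + p)" using C[rule_format, of "4*(b+i) - a"] by linarith
      moreover have "a + (4*(b+i) - a) = 4*(b+i)" using \<open>a \<le> 4*(b+i)\<close> by simp
      ultimately have "g (4*(b+i)) = g (4*(b+i+q))" using pq by (simp add: algebra_simps)
      then show ?thesis using g0[of "b+i"] g0[of "b+i+q"] by simp
    qed
    then show False using less.IH[OF pq(3) pq(2)] by blast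
  qed
qed

theorem theorem5:
  shows "\<not> (\<exists>(X :: nat list) (a :: nat). X \<noteq> [] \<and> set X \<subseteq> {0, 1} \<and>
            (\<forall>i < 3 * length X. g (a + i) = X ! (i mod length X)))"
proof
  assume "\<exists>(X :: nat list) (a :: nat). X \<noteq> [] \<and> set X \<subseteq> {0, 1} \<and>
            (\<forall>i < 3 * length X. g (a + i) = X ! (i mod length X))"
  then obtain X a where X: "X \<noteq> []" "\<forall>i < 3 * length X. g (a + i) = X ! (i mod length X)" by blast
  define p where "p = length X"
  have "g (a+i) = g (a+i+p)" if "i < 2*p" for i
  proof -
    have "g (a+i) = X ! (i mod p)" "g (a+(i+p)) = X ! ((i+p) mod p)" using X(2) that p_def by auto
    then show ?thesis by (simp add: add.assoc)
  qed
  moreover have "0 < p" using X(1) p_def by simp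
  ultimately show False using no_cube by blast
qed

end
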